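(* Let $\mathbf{C}$ be a category of $\mathbf{FI}$ type and $P$ a character polynomial of degree $\leq c$. Then the expectation $\mathbb{E}_{G_d}[P]:=\frac{1}{|G_d|}\sum_{\sigma\in G_d}P(\sigma)$ does not depend on $d$ for all objects $d\geq c$. Furthermore, if $P$ is the character of a free $\mathbf{C}$-module, then $\mathbb{E}_{G_d}[P]$ is a non-negative integer for every $d$ and is monotonically non-decreasing in $d$ (i.e. $\mathbb{E}_{G_d}[P]\leq\mathbb{E}_{G_e}[P]$ whenever $d\leq e$).
   Context: A category $\mathbf{C}$ is of $\mathbf{FI}$ type if: (1) all Hom-sets are finite; (2) every morphism is a monomorphism and every endomorphism is an isomorphism; (3) for all objects $c,d$ the group $G_d=\mathrm{Aut}_{\mathbf{C}}(d)$ acts transitively on $\mathrm{Hom}_{\mathbf{C}}(c,d)$; (4) for every $d$ only finitely many isomorphism classes of $c$ have $\mathrm{Hom}(c,d)\neq\emptyset$; (5) every pair $c_1\to d\leftarrow c_2$ has a pullback, and every pair $f_i:p\to c_i$ has a weak push-out, i.e. a commutative pullback square $g_i:c_i\to d$ such that for every other pullback square $h_i:c_i\to z$ with $h_1f_1=h_2f_2$ there is a unique $h:d\to z$ with $hg_i=h_i$. Write $c\leq d$ (or $d\geq c$) if $\mathrm{Hom}(c,d)\neq\emptyset$. Binomial set: $\binom{d}{c}=\mathrm{Hom}(c,d)/G_c$. For a conjugacy class $\mu\subseteq G_c$ (write $|\mu|=c$), $\binom{X}{\mu}$ is the class function on every $G_d$ given by $\sigma\mapsto\#\{[f]\in\binom{d}{c}:\exists\psi\in\mu,\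 \sigma f=f\psi\}$. A character polynomial is a $\mathbb{C}$-linear combination of these; it has degree $\leq d$ if each $\binom{X}{\mu}$ appearing nontrivially has $|\mu|\leq d$. For a finite-dimensional $G_c$-representation $V$, $\mathrm{Ind}_c(V)$ is the $\mathbf{C}$-module $d\mapsto\mathbb{C}[\mathrm{Hom}(c,d)]\otimes_{\mathbb{C}[G_c]}V$; a free $\mathbf{C}$-module is a finite direct sum of these, and its character assigns to each $G_d$ the character of its value at $d$. *)

theory Defs
  imports Complex_Main "Jordan_Normal_Form.Matrix"
begin

record ('o, 'm) cat =
  Obj  :: "'o set"
  Mor  :: "'m set"
  Dom  :: "'m \<Rightarrow> 'o"
  Cod  :: "'m \<Rightarrow> 'o"
  Idm  :: "'o \<Rightarrow> 'm"
  Comp :: "'m \<Rightarrow> 'm \<Rightarrow> 'm"   (* Comp C g f = g \<circ> f *)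

definition Hom :: "('o, 'm) cat \<Rightarrow> 'o \<Rightarrow> 'o \<Rightarrow> 'm set" where
  "Hom C c d = {f \<in> Mor C. Dom C f = c \<and> Cod C f = d}"

definition is_category :: "('o, 'm) cat \<Rightarrow> bool" where
  "is_category C \<longleftrightarrow>
     (\<forall>f \<in> Mor C. Dom C f \<in> Obj C \<and> Cod C f \<in> Obj C) \<and>
     (\<forall>c \<in> Obj C. Idm C c \<in> Hom C c c) \<and>
     (\<forall>f \<in> Mor C. \<forall>g \<in> Mor C. Cod C f = Dom C g \<longrightarrow>
         Comp C g f \<in> Hom C (Dom C f) (Cod C g)) \<and>
     (\<forall>f \<in> Mor C. Comp C f (Idm C (Dom C f)) = f \<and> Comp C (Idm C (Cod C f)) f = f) \<and>
     (\<forall>f \<in> Mor C. \<forall>g \<in> Mor C. \<forall>h \<in> Mor C. Cod C f = Dom C g \<longrightarrow> Cod C g = Dom C h \<longrightarrow>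
         Comp C h (Comp C g f) = Comp C (Comp C h g) f)"

definition Aut :: "('o, 'm) cat \<Rightarrow> 'o \<Rightarrow> 'm set" where
  "Aut C d = {f \<in> Hom C d d. \<exists>g \<in> Hom C d d. Comp C g f = Idm C d \<and> Comp C f g = Idm C d}"

definition iso_obj :: "('o, 'm) cat \<Rightarrow> 'o \<Rightarrow> 'o \<Rightarrow> bool" where
  "iso_obj C c d \<longleftrightarrow> (\<exists>f \<in> Hom C c d. \<exists>g \<in> Hom C d c.
      Comp C g f = Idm C c \<and> Comp C f g = Idm C d)"

definition obj_le :: "('o, 'm) cat \<Rightarrow> 'o \<Rightarrow> 'o \<Rightarrow> bool" where
  "obj_le C c d \<longleftrightarrow> Hom C c d \<noteq> {}"

definition is_pullback :: "('o, 'm) cat \<Rightarrow> 'o \<Rightarrow> 'm \<Rightarrow> 'm \<Rightarrow> 'm \<Rightarrow> 'm \<Rightarrow> bool" where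
  "is_pullback C p f1 f2 g1 g2 \<longleftrightarrow>
     f1 \<in> Hom C p (Dom C g1) \<and> f2 \<in> Hom C p (Dom C g2) \<and>
     g1 \<in> Mor C \<and> g2 \<in> Mor C \<and> Cod C g1 = Cod C g2 \<and>
     Comp C g1 f1 = Comp C g2 f2 \<and>
     (\<forall>q \<in> Obj C. \<forall>h1 \<in> Hom C q (Dom C g1). \<forall>h2 \<in> Hom C q (Dom C g2).
        Comp C g1 h1 = Comp C g2 h2 \<longrightarrow>
        (\<exists>!h. h \<in> Hom C q p \<and> Comp C f1 h = h1 \<and> Comp C f2 h = h2))"

definition FI_type :: "('o, 'm) cat \<Rightarrow> bool" where
  "FI_type C \<longleftrightarrow> is_category C \<and>
     \<comment> \<open>(1) finite Hom-sets\<close>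
     (\<forall>c \<in> Obj C. \<forall>d \<in> Obj C. finite (Hom C c d)) \<and>
     \<comment> \<open>(2) every morphism is mono, every endomorphism is an iso\<close>
     (\<forall>f \<in> Mor C. \<forall>g \<in> Mor C. \<forall>h \<in> Mor C.
        Cod C g = Dom C f \<longrightarrow> Dom C h = Dom C g \<longrightarrow> Cod C h = Dom C f \<longrightarrow>
        Comp C f g = Comp C f h \<longrightarrow> g = h) \<and>
     (\<forall>d \<in> Obj C. Hom C d d = Aut C d) \<and>
     \<comment> \<open>(3) \<open>G_d\<close> acts transitively on \<open>Hom(c,d)\<close>\<close>
     (\<forall>c \<in> Obj C. \<forall>d \<in> Obj C. \<forall>f \<in> Hom C c d. \<forall>g \<in> Hom C c d.
        \<exists>\<sigma> \<in> Aut C d. Comp C \<sigma> f = g) \<and>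
     \<comment> \<open>(4) finitely many isomorphism classes below each object\<close>
     (\<forall>d \<in> Obj C. \<exists>S. finite S \<and> S \<subseteq> Obj C \<and>
        (\<forall>c \<in> Obj C. Hom C c d \<noteq> {} \<longrightarrow> (\<exists>s \<in> S. iso_obj C s c))) \<and>
     \<comment> \<open>(5a) pullbacks\<close>
     (\<forall>g1 \<in> Mor C. \<forall>g2 \<in> Mor C. Cod C g1 = Cod C g2 \<longrightarrow>
        (\<exists>p f1 f2. p \<in> Obj C \<and> is_pullback C p f1 f2 g1 g2)) \<and>
     \<comment> \<open>(5b) weak push-outs\<close>
     (\<forall>f1 \<in> Mor C. \<forall>f2 \<in> Mor C. Dom C f1 = Dom C f2 \<longrightarrow>
        (\<exists>g1 g2. Dom C g1 = Cod C f1 \<and> Dom C g2 = Cod C f2 \<and>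
           is_pullback C (Dom C f1) f1 f2 g1 g2 \<and>
           (\<forall>h1 h2. Dom C h1 = Cod C f1 \<and> Dom C h2 = Cod C f2 \<and>
                is_pullback C (Dom C f1) f1 f2 h1 h2 \<longrightarrow>
              (\<exists>!h. h \<in> Hom C (Cod C g1) (Cod C h1) \<and>
                    Comp C h g1 = h1 \<and> Comp C h g2 = h2))))"

text \<open>\<open>binom d c = Hom(c,d)/G_c\<close>: the orbits of the right action of \<open>G_c\<close>.\<close>
definition binom :: "('o, 'm) cat \<Rightarrow> 'o \<Rightarrow> 'o \<Rightarrow> 'm set set" where
  "binom C d c = (\<lambda>f. {Comp C f \<psi> | \<psi>. \<psi> \<in> Aut C c}) ` Hom C c d"

definition is_conj_class :: "('o, 'm) cat \<Rightarrow> 'o \<Rightarrow> 'm set \<Rightarrow> bool" where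
  "is_conj_class C c \<mu> \<longleftrightarrow> c \<in> Obj C \<and>
     (\<exists>g \<in> Aut C c. \<mu> = {x \<in> Aut C c. \<exists>h \<in> Aut C c. Comp C h x = Comp C g h})"

text \<open>The class function \<open>binom X \<mu>\<close> (with \<open>|\<mu>| = c\<close>) evaluated at \<open>\<sigma> \<in> G_d\<close>.\<close>
definition binomX :: "('o, 'm) cat \<Rightarrow> 'o \<Rightarrow> 'm set \<Rightarrow> 'o \<Rightarrow> 'm \<Rightarrow> nat" where
  "binomX C c \<mu> d \<sigma> = card {Orb \<in> binom C d c. \<exists>f \<in> Orb. \<exists>\<psi> \<in> \<mu>. Comp C \<sigma> f = Comp C f \<psi>}"

text \<open>A character polynomial, given by a finite family \<open>M\<close> of conjugacy classes
  \<open>(c, \<mu>)\<close> (with \<open>\<mu> \<subseteq> G_c\<close>) and coefficients \<open>a\<close>.\<close>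
definition charpoly :: "('o, 'm) cat \<Rightarrow> ('o \<times> 'm set) set \<Rightarrow> ('o \<times> 'm set \<Rightarrow> complex)
                         \<Rightarrow> 'o \<Rightarrow> 'm \<Rightarrow> complex" where
  "charpoly C M a d \<sigma> = (\<Sum>(c, \<mu>) \<in> M. a (c, \<mu>) * of_nat (binomX C c \<mu> d \<sigma>))"

definition charpoly_data :: "('o, 'm) cat \<Rightarrow> ('o \<times> 'm set) set \<Rightarrow> bool" where
  "charpoly_data C M \<longleftrightarrow> finite M \<and> (\<forall>(c, \<mu>) \<in> M. is_conj_class C c \<mu>)"

definition charpoly_deg_le :: "('o, 'm) cat \<Rightarrow> ('o \<times> 'm set) set \<Rightarrow> ('o \<times> 'm set \<Rightarrow> complex)
                                \<Rightarrow> 'o \<Rightarrow> bool" where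
  "charpoly_deg_le C M a c0 \<longleftrightarrow> (\<forall>(c, \<mu>) \<in> M. a (c, \<mu>) \<noteq> 0 \<longrightarrow> obj_le C c c0)"

definition expect :: "('o, 'm) cat \<Rightarrow> ('o \<Rightarrow> 'm \<Rightarrow> complex) \<Rightarrow> 'o \<Rightarrow> complex" where
  "expect C P d = (\<Sum>\<sigma> \<in> Aut C d. P d \<sigma>) / of_nat (card (Aut C d))"

definition mat_trace :: "complex mat \<Rightarrow> complex" where
  "mat_trace A = (\<Sum>i < dim_row A. A $$ (i, i))"

definition is_rep :: "('o, 'm) cat \<Rightarrow> 'o \<Rightarrow> nat \<Rightarrow> ('m \<Rightarrow> complex mat) \<Rightarrow> bool" where
  "is_rep C c n \<rho> \<longleftrightarrow> c \<in> Obj C \<and>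
     (\<forall>g \<in> Aut C c. \<rho> g \<in> carrier_mat n n) \<and>
     \<rho> (Idm C c) = 1\<^sub>m n \<and>
     (\<forall>g \<in> Aut C c. \<forall>h \<in> Aut C c. \<rho> (Comp C g h) = \<rho> g * \<rho> h)"

text \<open>Character of \<open>Ind_c(V)(d) = \<complex>[Hom(c,d)] \<otimes>_{\<complex>[G_c]} V\<close> at \<open>\<sigma> \<in> G_d\<close>.
  Since \<open>G_c\<close> acts freely on \<open>Hom(c,d)\<close>, this module is \<open>\<Oplus>_{[f]} V\<close> and its trace is
  \<open>\<Sum>_{[f] : \<sigma> f = f \<psi>} \<chi>_V(\<psi>) = (1/|G_c|) \<Sum>_{f, \<psi> \<in> G_c, \<sigma> f = f \<psi>} \<chi>_V(\<psi>)\<close>.\<close>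
definition ind_char :: "('o, 'm) cat \<Rightarrow> 'o \<Rightarrow> ('m \<Rightarrow> complex mat) \<Rightarrow> 'o \<Rightarrow> 'm \<Rightarrow> complex" where
  "ind_char C c \<rho> d \<sigma> =
     (\<Sum>f \<in> Hom C c d. \<Sum>\<psi> \<in> {\<psi> \<in> Aut C c. Comp C \<sigma> f = Comp C f \<psi>}. mat_trace (\<rho> \<psi>))
     / of_nat (card (Aut C c))"

text \<open>A free module \<open>\<Oplus>_i Ind_{c_i}(V_i)\<close>, given as a list of triples \<open>(c_i, n_i, \<rho>_i)\<close>.\<close>
definition free_module_data :: "('o, 'm) cat \<Rightarrow> ('o \<times> nat \<times> ('m \<Rightarrow> complex mat)) list \<Rightarrow> bool" where
  "free_module_data C F \<longleftrightarrow> (\<forall>(c, n, \<rho>) \<in> set F. is_rep C c n \<rho>)"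

definition free_char :: "('o, 'm) cat \<Rightarrow> ('o \<times> nat \<times> ('m \<Rightarrow> complex mat)) list \<Rightarrow> 'o \<Rightarrow> 'm \<Rightarrow> complex" where
  "free_char C F d \<sigma> = (\<Sum>(c, n, \<rho>) \<leftarrow> F. ind_char C c \<rho> d \<sigma>)"

end

theory Submission
  imports Defs "Jordan_Normal_Form.Schur_Decomposition"
begin

locale FIC =
  fixes C :: "('o, 'm) cat"
  assumes FI: "FI_type C"
begin

lemma cat: "is_category C" using FI unfolding FI_type_def by blast

lemma homD: "f \<in> Hom C a b \<Longrightarrow> f \<in> Mor C \<and> Dom C f = a \<and> Cod C f = b"
  unfolding Hom_def by auto

lemma cat_parts:
  "\<forall>f \<in> Mor C. Dom C f \<in> Obj C \<and> Cod C f \<in> Obj C"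
  "\<forall>c \<in> Obj C. Idm C c \<in> Hom C c c"
  "\<forall>f \<in> Mor C. \<forall>g \<in> Mor C. Cod C f = Dom C g \<longrightarrow>
         Comp C g f \<in> Hom C (Dom C f) (Cod C g)"
  "\<forall>f \<in> Mor C. Comp C f (Idm C (Dom C f)) = f \<and> Comp C (Idm C (Cod C f)) f = f"
  "\<forall>f \<in> Mor C. \<forall>g \<in> Mor C. \<forall>h \<in> Mor C. Cod C f = Dom C g \<longrightarrow> Cod C g = Dom C h \<longrightarrow>
         Comp C h (Comp C g f) = Comp C (Comp C h g) f"
  using cat unfolding is_category_def by simp_all

lemma hom_obj: "f \<in> Hom C a b \<Longrightarrow> a \<in> Obj C \<and> b \<in> Obj C"
  using cat_parts(1) homD by blast

lemma id_hom: "c \<in> Obj C \<Longrightarrow> Idm C c \<in> Hom C c c"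
  using cat_parts(2) by blast

lemma comp_hom: "f \<in> Hom C a b \<Longrightarrow> g \<in> Hom C b c \<Longrightarrow> Comp C g f \<in> Hom C a c"
proof -
  assume f: "f \<in> Hom C a b" and g: "g \<in> Hom C b c"
  from homD[OF f] homD[OF g] cat_parts(3)[rule_format, of f g] show ?thesis by simp
qed

lemma id_left: "f \<in> Hom C a b \<Longrightarrow> Comp C (Idm C b) f = f"
proof -
  assume f: "f \<in> Hom C a b"
  from homD[OF f] cat_parts(4) show ?thesis by auto
qed

lemma id_right: "f \<in> Hom C a b \<Longrightarrow> Comp C f (Idm C a) = f"
proof -
  assume f: "f \<in> Hom C a b"
  from homD[OF f] cat_parts(4) show ?thesis by auto
qed

lemma assoc: "f \<in> Hom C a b \<Longrightarrow> g \<in> Hom C b c \<Longrightarrow> h \<in> Hom C c d \<Longrightarrow>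
   Comp C h (Comp C g f) = Comp C (Comp C h g) f"
proof -
  assume f: "f \<in> Hom C a b" and g: "g \<in> Hom C b c" and h: "h \<in> Hom C c d"
  from homD[OF f] homD[OF g] homD[OF h] cat_parts(5)[rule_format, of f g h] show ?thesis by simp
qed

lemma cancel: "f \<in> Hom C b c \<Longrightarrow> g \<in> Hom C a b \<Longrightarrow> h \<in> Hom C a b \<Longrightarrow>
   Comp C f g = Comp C f h \<Longrightarrow> g = h"
proof -
  assume a: "f \<in> Hom C b c" "g \<in> Hom C a b" "h \<in> Hom C a b" "Comp C f g = Comp C f h"
  have m: "\<forall>f \<in> Mor C. \<forall>g \<in> Mor C. \<forall>h \<in> Mor C.
        Cod C g = Dom C f \<longrightarrow> Dom C h = Dom C g \<longrightarrow> Cod C h = Dom C f \<longrightarrow>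
        Comp C f g = Comp C f h \<longrightarrow> g = h" using FI unfolding FI_type_def by (elim conjE) assumption
  have f: "f \<in> Mor C" "Dom C f = b" using homD[OF a(1)] by auto
  have g: "g \<in> Mor C" "Dom C g = a" "Cod C g = b" using homD[OF a(2)] by auto
  have h: "h \<in> Mor C" "Dom C h = a" "Cod C h = b" using homD[OF a(3)] by auto
  show "g = h" by (rule m[rule_format, OF f(1) g(1) h(1)]) (use f g h a(4) in auto)
qed

lemma aut_hom: "Aut C d \<subseteq> Hom C d d" unfolding Aut_def by auto

lemma hom_aut: "Hom C d d = Aut C d"
proof (cases "d \<in> Obj C")
  case True
  have "\<forall>d \<in> Obj C. Hom C d d = Aut C d"
    using FI unfolding FI_type_def by (elim conjE) assumption
  then show ?thesis using True by blast
next
  case False then show ?thesis using hom_obj aut_hom by blast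
qed

lemma aut_comp: "g \<in> Aut C d \<Longrightarrow> h \<in> Aut C d \<Longrightarrow> Comp C g h \<in> Aut C d"
  using comp_hom[of h d d g d] hom_aut[of d] by simp

lemma aut_id: "d \<in> Obj C \<Longrightarrow> Idm C d \<in> Aut C d"
  using id_hom[of d] hom_aut[of d] by simp

lemma aut_inv: "g \<in> Aut C d \<Longrightarrow> \<exists>g'\<in>Aut C d. Comp C g' g = Idm C d \<and> Comp C g g' = Idm C d"
proof -
  assume "g \<in> Aut C d"
  then obtain g' where "g' \<in> Hom C d d" "Comp C g' g = Idm C d \<and> Comp C g g' = Idm C d"
    unfolding Aut_def by blast
  then show ?thesis using hom_aut[of d] by auto
qed

lemma transit: "f \<in> Hom C c d \<Longrightarrow> g \<in> Hom C c d \<Longrightarrow> \<exists>\<sigma>\<in>Aut C d. Comp C \<sigma> f = g"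
proof -
  assume a: "f \<in> Hom C c d" "g \<in> Hom C c d"
  have t: "\<forall>c \<in> Obj C. \<forall>d \<in> Obj C. \<forall>f \<in> Hom C c d. \<forall>g \<in> Hom C c d.
        \<exists>\<sigma> \<in> Aut C d. Comp C \<sigma> f = g" using FI unfolding FI_type_def by (elim conjE) assumption
  then show ?thesis using a hom_obj by blast
qed

lemma fin_hom: "finite (Hom C c d)"
proof (cases "c \<in> Obj C \<and> d \<in> Obj C")
  case True
  have "\<forall>c \<in> Obj C. \<forall>d \<in> Obj C. finite (Hom C c d)"
    using FI unfolding FI_type_def by (elim conjE) assumption
  then show ?thesis using True by blast
next
  case False then have "Hom C c d = {}" using hom_obj by blast
  then show ?thesis by simp
qed

lemma fin_aut: "finite (Aut C d)"
  using fin_hom[of d d] aut_hom[of d] finite_subset by auto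

lemma aut_card_pos: "d \<in> Obj C \<Longrightarrow> card (Aut C d) > 0"
  using fin_aut[of d] aut_id[of d] card_gt_0_iff by auto

lemma fiber_card:
  assumes f: "f \<in> Hom C c d" and g: "g \<in> Hom C c d"
  shows "card {\<sigma>\<in>Aut C d. Comp C \<sigma> f = g} = card {\<sigma>\<in>Aut C d. Comp C \<sigma> f = f}"
proof -
  obtain \<tau> where \<tau>: "\<tau> \<in> Aut C d" "Comp C \<tau> f = g" using transit[OF f g] by blast
  obtain \<tau>' where \<tau>': "\<tau>' \<in> Aut C d" "Comp C \<tau>' \<tau> = Idm C d" "Comp C \<tau> \<tau>' = Idm C d"
    using aut_inv[OF \<tau>(1)] by blast
  have dO: "d \<in> Obj C" using hom_obj f by blast
  have H: "x \<in> Aut C d \<Longrightarrow> x \<in> Hom C d d" for x using aut_hom by blast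
  have "bij_betw (Comp C \<tau>) {\<sigma>\<in>Aut C d. Comp C \<sigma> f = f} {\<sigma>\<in>Aut C d. Comp C \<sigma> f = g}"
  proof (rule bij_betw_imageI)
    show "inj_on (Comp C \<tau>) {\<sigma> \<in> Aut C d. Comp C \<sigma> f = f}"
      by (rule inj_onI) (use cancel H \<tau>(1) in blast)
    show "Comp C \<tau> ` {\<sigma> \<in> Aut C d. Comp C \<sigma> f = f} = {\<sigma> \<in> Aut C d. Comp C \<sigma> f = g}"
    proof (intro equalityI subsetI)
      fix x assume "x \<in> Comp C \<tau> ` {\<sigma> \<in> Aut C d. Comp C \<sigma> f = f}"
      then obtain \<sigma> where s: "\<sigma> \<in> Aut C d" "Comp C \<sigma> f = f" "x = Comp C \<tau> \<sigma>" by blast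
      have "Comp C x f = Comp C \<tau> (Comp C \<sigma> f)" using s assoc[OF f H H] \<tau> by metis
      then show "x \<in> {\<sigma> \<in> Aut C d. Comp C \<sigma> f = g}" using s \<tau> aut_comp by auto
    next
      fix x assume x: "x \<in> {\<sigma> \<in> Aut C d. Comp C \<sigma> f = g}"
      let ?s = "Comp C \<tau>' x"
      have "Comp C \<tau> ?s = Comp C (Comp C \<tau> \<tau>') x" using assoc[OF H H H] x \<tau> \<tau>' by blast
      also have "\<dots> = x" using \<tau>' id_left H x by auto
      finally have e1: "Comp C \<tau> ?s = x" .
      have "Comp C ?s f = Comp C \<tau>' g" using assoc[OF f H H] x \<tau>' by auto
      also have "\<dots> = Comp C (Comp C \<tau>' \<tau>) f" using assoc[OF f H H] \<tau> \<tau>' by auto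
      also have "\<dots> = f" using \<tau>' id_left f by auto
      finally have "Comp C ?s f = f" .
      moreover have "?s \<in> Aut C d" using aut_comp \<tau>' x by auto
      ultimately show "x \<in> Comp C \<tau> ` {\<sigma> \<in> Aut C d. Comp C \<sigma> f = f}" using e1 by force
    qed
  qed
  from bij_betw_same_card[OF this] show ?thesis by simp
qed

lemma aut_card:
  assumes f: "f \<in> Hom C c d"
  shows "card (Aut C d) = card (Hom C c d) * card {\<sigma>\<in>Aut C d. Comp C \<sigma> f = f}"
proof -
  have "Aut C d = (\<Union>g\<in>Hom C c d. {\<sigma>\<in>Aut C d. Comp C \<sigma> f = g})"
    using comp_hom[OF f] aut_hom by blast
  moreover have "card (\<Union>g\<in>Hom C c d. {\<sigma>\<in>Aut C d. Comp C \<sigma> f = g})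
     = (\<Sum>g\<in>Hom C c d. card {\<sigma>\<in>Aut C d. Comp C \<sigma> f = g})"
    by (rule card_UN_disjoint) (auto simp: fin_hom fin_aut)
  ultimately have "card (Aut C d) = (\<Sum>g\<in>Hom C c d. card {\<sigma>\<in>Aut C d. Comp C \<sigma> f = g})"
    by simp
  also have "\<dots> = (\<Sum>g\<in>Hom C c d. card {\<sigma>\<in>Aut C d. Comp C \<sigma> f = f})"
    using fiber_card[OF f] by simp
  finally show ?thesis by simp
qed

lemma stab_sum:
  assumes "Hom C c d \<noteq> {}"
  shows "(\<Sum>f\<in>Hom C c d. card {\<sigma>\<in>Aut C d. Comp C \<sigma> f = f}) = card (Aut C d)"
proof -
  obtain f0 where f0: "f0 \<in> Hom C c d" using assms by blast
  have pos: "card (Hom C c d) > 0" using assms fin_hom card_gt_0_iff by blast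
  have "card {\<sigma>\<in>Aut C d. Comp C \<sigma> f = f} = card {\<sigma>\<in>Aut C d. Comp C \<sigma> f0 = f0}"
    if "f \<in> Hom C c d" for f
    using aut_card[OF that] aut_card[OF f0] pos by simp
  then have "(\<Sum>f\<in>Hom C c d. card {\<sigma>\<in>Aut C d. Comp C \<sigma> f = f})
      = card (Hom C c d) * card {\<sigma>\<in>Aut C d. Comp C \<sigma> f0 = f0}" by simp
  then show ?thesis using aut_card[OF f0] by simp
qed

end


lemma trace_comm:
  fixes X Y :: "complex mat"
  assumes "X \<in> carrier_mat n m" "Y \<in> carrier_mat m n"
  shows "mat_trace (X * Y) = mat_trace (Y * X)"
proof -
  have "mat_trace (X * Y) = (\<Sum>i<n. \<Sum>k<m. X $$ (i,k) * Y $$ (k,i))"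
    using assms unfolding mat_trace_def
    by (intro sum.cong) (auto simp: scalar_prod_def atLeast0LessThan)
  also have "\<dots> = (\<Sum>k<m. \<Sum>i<n. Y $$ (k,i) * X $$ (i,k))"
    by (subst sum.swap) (simp add: mult.commute)
  also have "\<dots> = mat_trace (Y * X)"
    using assms unfolding mat_trace_def
    by (intro sum.cong) (auto simp: scalar_prod_def atLeast0LessThan)
  finally show ?thesis .
qed

lemma idem_trace_nat:
  fixes A :: "complex mat"
  assumes A: "A \<in> carrier_mat n n" and idem: "A * A = A"
  shows "\<exists>k::nat. mat_trace A = of_nat k"
proof -
  obtain es where es: "char_poly A = (\<Prod> a \<leftarrow> es. [:- a, 1:])"
    using char_poly_factorized[OF A] by blast
  define B where "B = schur_upper_triangular A es"
  have B: "B \<in> carrier_mat n n" "upper_triangular B" "similar_mat A B"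
    using schur_upper_triangular[OF A es] unfolding B_def by auto
  from similar_matD[OF B(3)] obtain m P Q where
    PQ: "{A,B,P,Q} \<subseteq> carrier_mat m m" "P * Q = 1\<^sub>m m" "Q * P = 1\<^sub>m m" "A = P * B * Q" by blast
  have mn: "m = n" using PQ(1) A by auto
  have P: "P \<in> carrier_mat n n" and Q: "Q \<in> carrier_mat n n" using PQ(1) mn by auto
  have BQAP: "B = Q * A * P"
  proof -
    have "Q * A * P = Q * (P * B * Q) * P" using PQ by simp
    also have "\<dots> = (Q * P) * B * (Q * P)"
      using P Q B by (simp add: assoc_mult_mat[of _ n n _ n _ n])
    also have "\<dots> = B" using PQ mn B by simp
    finally show ?thesis by simp
  qed
  have BB: "B * B = B"
  proof -
    have "B * B = Q * A * P * (Q * A * P)" using BQAP by simp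
    also have "\<dots> = Q * A * (P * Q) * A * P"
      using P Q A by (simp add: assoc_mult_mat[of _ n n _ n _ n])
    also have "\<dots> = Q * (A * A) * P"
      using P Q A PQ mn by (simp add: assoc_mult_mat[of _ n n _ n _ n])
    also have "\<dots> = B" using idem BQAP by simp
    finally show ?thesis .
  qed
  have diag: "B $$ (i,i) = 0 \<or> B $$ (i,i) = 1" if i: "i < n" for i
  proof -
    have "(B * B) $$ (i,i) = (\<Sum>k\<in>{0..<n}. B $$ (i,k) * B $$ (k,i))"
      using B i by (simp add: scalar_prod_def)
    also have "\<dots> = (\<Sum>k\<in>{i}. B $$ (i,k) * B $$ (k,i))"
    proof (rule sum.mono_neutral_right)
      show "\<forall>k\<in>{0..<n} - {i}. B $$ (i, k) * B $$ (k, i) = 0"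
      proof
        fix k assume k: "k \<in> {0..<n} - {i}"
        show "B $$ (i, k) * B $$ (k, i) = 0"
        proof (cases "k < i")
          case True then show ?thesis using B i by (auto dest: upper_triangularD)
        next
          case False then have "i < k" using k by auto
          then show ?thesis using B k by (auto dest: upper_triangularD)
        qed
      qed
    qed (use i in auto)
    finally have "B $$ (i,i) * B $$ (i,i) = B $$ (i,i)" using BB by simp
    then show ?thesis
      by (metis mult_cancel_right1 mult_zero_right)
  qed
  have "mat_trace A = mat_trace (P * (B * Q))"
    using PQ P Q B by (simp add: assoc_mult_mat[of _ n n _ n _ n])
  also have "\<dots> = mat_trace ((B * Q) * P)"
    by (rule trace_comm[OF P]) (use B Q in auto)
  also have "\<dots> = mat_trace B"
    using PQ P Q B mn by (simp add: assoc_mult_mat[of _ n n _ n _ n])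
  also have "\<dots> = (\<Sum>i<n. B $$ (i,i))" using B unfolding mat_trace_def by simp
  also have "\<dots> = (\<Sum>i<n. of_nat (if B $$ (i,i) = 1 then 1 else 0))"
    by (rule sum.cong) (use diag in auto)
  also have "\<dots> = of_nat (\<Sum>i<n. (if B $$ (i,i) = 1 then 1 else 0))"
    by simp
  finally show ?thesis by blast
qed


lemma sum_swap3:
  "(\<Sum>k\<in>A. \<Sum>h\<in>B. \<Sum>g\<in>D. X g h k) = (\<Sum>g\<in>D. \<Sum>h\<in>B. \<Sum>k\<in>A. X g h k)"
proof -
  have "(\<Sum>k\<in>A. \<Sum>h\<in>B. \<Sum>g\<in>D. X g h k) = (\<Sum>h\<in>B. \<Sum>k\<in>A. \<Sum>g\<in>D. X g h k)"
    by (rule sum.swap)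
  also have "\<dots> = (\<Sum>h\<in>B. \<Sum>g\<in>D. \<Sum>k\<in>A. X g h k)"
    by (rule sum.cong[OF refl], rule sum.swap)
  also have "\<dots> = (\<Sum>g\<in>D. \<Sum>h\<in>B. \<Sum>k\<in>A. X g h k)"
    by (rule sum.swap)
  finally show ?thesis .
qed

lemma sum_swap3':
  "(\<Sum>k\<in>A. \<Sum>g\<in>D. \<Sum>h\<in>B. X g h k) = (\<Sum>g\<in>D. \<Sum>h\<in>B. \<Sum>k\<in>A. X g h k)"
proof -
  have "(\<Sum>k\<in>A. \<Sum>g\<in>D. \<Sum>h\<in>B. X g h k) = (\<Sum>g\<in>D. \<Sum>k\<in>A. \<Sum>h\<in>B. X g h k)"
    by (rule sum.swap)
  also have "\<dots> = (\<Sum>g\<in>D. \<Sum>h\<in>B. \<Sum>k\<in>A. X g h k)"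
    by (rule sum.cong[OF refl], rule sum.swap)
  finally show ?thesis .
qed

context FIC begin

lemma aut_bij:
  assumes g: "g \<in> Aut C d"
  shows "bij_betw (Comp C g) (Aut C d) (Aut C d)"
proof (rule bij_betw_imageI)
  have H: "x \<in> Aut C d \<Longrightarrow> x \<in> Hom C d d" for x using aut_hom by blast
  show "inj_on (Comp C g) (Aut C d)"
    by (rule inj_onI) (use cancel H g in blast)
  obtain g' where g': "g' \<in> Aut C d" "Comp C g' g = Idm C d" "Comp C g g' = Idm C d"
    using aut_inv[OF g] by blast
  show "Comp C g ` Aut C d = Aut C d"
  proof (intro equalityI subsetI)
    fix x assume "x \<in> Comp C g ` Aut C d" then show "x \<in> Aut C d" using aut_comp g by auto
  next
    fix x assume x: "x \<in> Aut C d"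
    have "Comp C g (Comp C g' x) = Comp C (Comp C g g') x" using assoc[OF H H H] x g g' by blast
    also have "\<dots> = x" using g' id_left H x by auto
    finally show "x \<in> Comp C g ` Aut C d" using aut_comp[OF g'(1) x] by force
  qed
qed

lemma ind_sum:
  fixes t :: "'m \<Rightarrow> complex"
  assumes ne: "Hom C c d \<noteq> {}"
  shows "(\<Sum>\<sigma>\<in>Aut C d. \<Sum>f\<in>Hom C c d. \<Sum>\<psi>\<in>{\<psi>\<in>Aut C c. Comp C \<sigma> f = Comp C f \<psi>}. t \<psi>)
       = of_nat (card (Aut C d)) * (\<Sum>\<psi>\<in>Aut C c. t \<psi>)"
proof -
  have "(\<Sum>\<sigma>\<in>Aut C d. \<Sum>f\<in>Hom C c d. \<Sum>\<psi>\<in>{\<psi>\<in>Aut C c. Comp C \<sigma> f = Comp C f \<psi>}. t \<psi>)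
      = (\<Sum>\<sigma>\<in>Aut C d. \<Sum>f\<in>Hom C c d. \<Sum>\<psi>\<in>Aut C c. if Comp C \<sigma> f = Comp C f \<psi> then t \<psi> else 0)"
    by (simp add: sum.inter_filter fin_aut)
  also have "\<dots> = (\<Sum>f\<in>Hom C c d. \<Sum>\<psi>\<in>Aut C c. \<Sum>\<sigma>\<in>Aut C d. if Comp C \<sigma> f = Comp C f \<psi> then t \<psi> else 0)"
    by (subst sum.swap) (simp add: sum.swap[of _ "Aut C d"])
  also have "\<dots> = (\<Sum>f\<in>Hom C c d. \<Sum>\<psi>\<in>Aut C c. of_nat (card {\<sigma>\<in>Aut C d. Comp C \<sigma> f = f}) * t \<psi>)"
  proof (intro sum.cong refl)
    fix f \<psi> assume f: "f \<in> Hom C c d" and \<psi>: "\<psi> \<in> Aut C c"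
    have fp: "Comp C f \<psi> \<in> Hom C c d" using comp_hom[OF _ f] \<psi> aut_hom by blast
    have "(\<Sum>\<sigma>\<in>Aut C d. if Comp C \<sigma> f = Comp C f \<psi> then t \<psi> else 0)
        = (\<Sum>\<sigma>\<in>{\<sigma>\<in>Aut C d. Comp C \<sigma> f = Comp C f \<psi>}. t \<psi>)"
      by (rule sum.inter_filter[symmetric, OF fin_aut])
    also have "\<dots> = of_nat (card {\<sigma>\<in>Aut C d. Comp C \<sigma> f = Comp C f \<psi>}) * t \<psi>" by simp
    also have "\<dots> = of_nat (card {\<sigma>\<in>Aut C d. Comp C \<sigma> f = f}) * t \<psi>"
      using fiber_card[OF f fp] by simp
    finally show "(\<Sum>\<sigma>\<in>Aut C d. if Comp C \<sigma> f = Comp C f \<psi> then t \<psi> else 0)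
        = of_nat (card {\<sigma>\<in>Aut C d. Comp C \<sigma> f = f}) * t \<psi>" .
  qed
  also have "\<dots> = (\<Sum>f\<in>Hom C c d. of_nat (card {\<sigma>\<in>Aut C d. Comp C \<sigma> f = f})) * (\<Sum>\<psi>\<in>Aut C c. t \<psi>)"
    by (simp only: sum_product)
  also have "\<dots> = of_nat (card (Aut C d)) * (\<Sum>\<psi>\<in>Aut C c. t \<psi>)"
  proof -
    have "(\<Sum>f\<in>Hom C c d. of_nat (card {\<sigma>\<in>Aut C d. Comp C \<sigma> f = f}) :: complex)
        = of_nat (\<Sum>f\<in>Hom C c d. card {\<sigma>\<in>Aut C d. Comp C \<sigma> f = f})"
      by (rule of_nat_sum[symmetric])
    also have "\<dots> = of_nat (card (Aut C d))" using stab_sum[OF ne] by simp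
    finally show ?thesis by simp
  qed
  finally show ?thesis .
qed

lemma ind_sum_empty:
  fixes t :: "'m \<Rightarrow> complex"
  assumes "Hom C c d = {}"
  shows "(\<Sum>\<sigma>\<in>Aut C d. \<Sum>f\<in>Hom C c d. \<Sum>\<psi>\<in>{\<psi>\<in>Aut C c. Comp C \<sigma> f = Comp C f \<psi>}. t \<psi>) = 0"
  using assms by simp

lemma rep_avg:
  assumes rep: "is_rep C c n \<rho>"
  shows "\<exists>k::nat. (\<Sum>\<psi>\<in>Aut C c. mat_trace (\<rho> \<psi>)) / of_nat (card (Aut C c)) = of_nat k"
proof -
  define G where "G = Aut C c"
  define N where "N = card G"
  have cO: "c \<in> Obj C" using rep unfolding is_rep_def by blast
  have Npos: "N > 0" unfolding N_def G_def using aut_card_pos[OF cO] .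
  have fG: "finite G" unfolding G_def using fin_aut .
  have car: "g \<in> G \<Longrightarrow> \<rho> g \<in> carrier_mat n n" for g using rep unfolding is_rep_def G_def by blast
  have dims: "g \<in> G \<Longrightarrow> dim_row (\<rho> g) = n \<and> dim_col (\<rho> g) = n" for g
    using car[of g] by auto
  have hom: "g \<in> G \<Longrightarrow> h \<in> G \<Longrightarrow> \<rho> (Comp C g h) = \<rho> g * \<rho> h" for g h
    using rep unfolding is_rep_def G_def by blast
  define S where "S = (\<lambda>i j. \<Sum>g\<in>G. \<rho> g $$ (i,j))"
  define Pm where "Pm = mat n n (\<lambda>(i,j). S i j / of_nat N)"
  have Pm: "Pm \<in> carrier_mat n n" unfolding Pm_def by simp
  have tr: "mat_trace Pm = (\<Sum>\<psi>\<in>G. mat_trace (\<rho> \<psi>)) / of_nat N"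
  proof -
    have "mat_trace Pm = (\<Sum>i<n. S i i / of_nat N)" unfolding mat_trace_def Pm_def by simp
    also have "\<dots> = (\<Sum>i<n. \<Sum>g\<in>G. \<rho> g $$ (i,i)) / of_nat N"
      unfolding S_def by (simp add: sum_divide_distrib)
    also have "\<dots> = (\<Sum>g\<in>G. \<Sum>i<n. \<rho> g $$ (i,i)) / of_nat N"
      by (subst sum.swap) simp
    also have "\<dots> = (\<Sum>\<psi>\<in>G. mat_trace (\<rho> \<psi>)) / of_nat N"
      unfolding mat_trace_def using car by (intro arg_cong2[where f="(/)"] sum.cong) auto
    finally show ?thesis .
  qed
  have reidx: "(\<Sum>h\<in>G. \<rho> (Comp C g h) $$ (i,j)) = S i j" if g: "g \<in> G" for g i j
    unfolding S_def G_def
    using sum.reindex_bij_betw[OF aut_bij[OF g[unfolded G_def]], of "\<lambda>h. \<rho> h $$ (i,j)"] by simp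
  have idem: "Pm * Pm = Pm"
  proof (rule eq_matI)
    show "dim_row (Pm * Pm) = dim_row Pm" "dim_col (Pm * Pm) = dim_col Pm" using Pm by auto
    fix i j assume i: "i < dim_row Pm" and j: "j < dim_col Pm"
    then have i: "i < n" and j: "j < n" using Pm by auto
    have "(Pm * Pm) $$ (i,j) = (\<Sum>k\<in>{0..<n}. (S i k / of_nat N) * (S k j / of_nat N))"
      using i j unfolding Pm_def by (simp add: scalar_prod_def)
    also have "\<dots> = (\<Sum>k\<in>{0..<n}. (\<Sum>g\<in>G. \<Sum>h\<in>G. \<rho> g $$ (i,k) * \<rho> h $$ (k,j)) / (of_nat N * of_nat N))"
    proof (rule sum.cong[OF refl])
      fix k
      have "(S i k / of_nat N) * (S k j / of_nat N) = (S i k * S k j) / (of_nat N * of_nat N)"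
        by (rule times_divide_times_eq)
      also have "S i k * S k j = (\<Sum>g\<in>G. \<Sum>h\<in>G. \<rho> g $$ (i,k) * \<rho> h $$ (k,j))"
        unfolding S_def by (rule sum_product)
      finally show "(S i k / of_nat N) * (S k j / of_nat N) = (\<Sum>g\<in>G. \<Sum>h\<in>G. \<rho> g $$ (i,k) * \<rho> h $$ (k,j)) / (of_nat N * of_nat N)" .
    qed
    also have "\<dots> = (\<Sum>k\<in>{0..<n}. \<Sum>g\<in>G. \<Sum>h\<in>G. \<rho> g $$ (i,k) * \<rho> h $$ (k,j)) / (of_nat N * of_nat N)"
      by (rule sum_divide_distrib[symmetric])
    also have "\<dots> = (\<Sum>g\<in>G. \<Sum>h\<in>G. \<Sum>k\<in>{0..<n}. \<rho> g $$ (i,k) * \<rho> h $$ (k,j)) / (of_nat N * of_nat N)"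
      by (simp only: sum_swap3'[where A="{0..<n}" and B=G and D=G])
    also have "\<dots> = (\<Sum>g\<in>G. \<Sum>h\<in>G. (\<rho> g * \<rho> h) $$ (i,j)) / (of_nat N * of_nat N)"
      using dims i j by (intro arg_cong2[where f="(/)"] sum.cong refl) (auto simp: scalar_prod_def)
    also have "\<dots> = (\<Sum>g\<in>G. \<Sum>h\<in>G. \<rho> (Comp C g h) $$ (i,j)) / (of_nat N * of_nat N)"
      using hom by (intro arg_cong2[where f="(/)"] sum.cong refl) auto
    also have "\<dots> = (\<Sum>g\<in>G. S i j) / (of_nat N * of_nat N)"
      using reidx by (intro arg_cong2[where f="(/)"] sum.cong refl) auto
    also have "\<dots> = S i j / of_nat N" using Npos unfolding N_def by simp
    also have "\<dots> = Pm $$ (i,j)" using i j unfolding Pm_def by simp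
    finally show "(Pm * Pm) $$ (i,j) = Pm $$ (i,j)" .
  qed
  obtain k :: nat where "mat_trace Pm = of_nat k" using idem_trace_nat[OF Pm idem] by blast
  then show ?thesis using tr unfolding G_def N_def by auto
qed

end


context FIC begin

lemma aut_hom': "x \<in> Aut C c \<Longrightarrow> x \<in> Hom C c c" using aut_hom by blast

lemma assoc_hAA: "f \<in> Hom C c d \<Longrightarrow> y \<in> Aut C c \<Longrightarrow> x \<in> Aut C c \<Longrightarrow>
   Comp C f (Comp C y x) = Comp C (Comp C f y) x"
  using assoc[OF aut_hom' aut_hom'] by blast

lemma assoc_AhA: "\<sigma> \<in> Aut C d \<Longrightarrow> f \<in> Hom C c d \<Longrightarrow> x \<in> Aut C c \<Longrightarrow>
   Comp C \<sigma> (Comp C f x) = Comp C (Comp C \<sigma> f) x"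
  using assoc[OF aut_hom' _ aut_hom'] by blast

lemma hom_aut_comp: "f \<in> Hom C c d \<Longrightarrow> x \<in> Aut C c \<Longrightarrow> Comp C f x \<in> Hom C c d"
  using comp_hom[OF aut_hom'] by blast

lemma inv_cancel:
  assumes f: "f \<in> Hom C c d" and p: "p \<in> Aut C c" and p': "p' \<in> Aut C c"
    and pp: "Comp C p p' = Idm C c" and y: "y \<in> Aut C c"
  shows "Comp C (Comp C (Comp C f p) p') y = Comp C f y"
proof -
  have "Comp C (Comp C f p) p' = Comp C f (Comp C p p')" using assoc_hAA[OF f p p'] by simp
  also have "\<dots> = f" using pp id_right[OF f] by simp
  finally show ?thesis by simp
qed

definition orb :: "'o \<Rightarrow> 'm \<Rightarrow> 'm set" where
  "orb c f = {Comp C f \<psi> | \<psi>. \<psi> \<in> Aut C c}"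

lemma binom_eq: "binom C d c = orb c ` Hom C c d"
  unfolding binom_def orb_def by simp

lemma orb_sub: "f \<in> Hom C c d \<Longrightarrow> orb c f \<subseteq> Hom C c d"
  unfolding orb_def using hom_aut_comp by blast

lemma orb_card: assumes f: "f \<in> Hom C c d" shows "card (orb c f) = card (Aut C c)"
proof -
  have "orb c f = Comp C f ` Aut C c" unfolding orb_def by blast
  moreover have "inj_on (Comp C f) (Aut C c)"
    by (rule inj_onI) (use cancel[OF f] aut_hom' in blast)
  ultimately show ?thesis by (simp add: card_image)
qed

lemma orb_self: assumes f: "f \<in> Hom C c d" shows "f \<in> orb c f"
proof -
  have "c \<in> Obj C" using hom_obj[OF f] by blast
  then have "Idm C c \<in> Aut C c" by (rule aut_id)
  then show ?thesis unfolding orb_def using id_right[OF f] by force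
qed

lemma orb_eq: assumes f: "f \<in> Hom C c d" and g: "g \<in> orb c f" shows "orb c g = orb c f"
proof -
  obtain p where p: "p \<in> Aut C c" "g = Comp C f p" using g unfolding orb_def by blast
  obtain p' where p': "p' \<in> Aut C c" "Comp C p' p = Idm C c" "Comp C p p' = Idm C c"
    using aut_inv[OF p(1)] by blast
  show ?thesis
  proof (intro equalityI subsetI)
    fix x assume "x \<in> orb c g"
    then obtain y where y: "y \<in> Aut C c" "x = Comp C g y" unfolding orb_def by blast
    have "x = Comp C f (Comp C p y)" using y p assoc_hAA[OF f p(1) y(1)] by simp
    then show "x \<in> orb c f" unfolding orb_def using aut_comp[OF p(1) y(1)] by blast
  next
    fix x assume "x \<in> orb c f"
    then obtain y where y: "y \<in> Aut C c" "x = Comp C f y" unfolding orb_def by blast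
    have g': "g \<in> Hom C c d" using p f hom_aut_comp by simp
    have "Comp C g (Comp C p' y) = Comp C (Comp C g p') y" using assoc_hAA[OF g' p'(1) y(1)] .
    also have "\<dots> = x" using inv_cancel[OF f p(1) p'(1) p'(3) y(1)] p y by simp
    finally show "x \<in> orb c g" unfolding orb_def using aut_comp[OF p'(1) y(1)] by force
  qed
qed

lemma conj_sub: "is_conj_class C c \<mu> \<Longrightarrow> \<mu> \<subseteq> Aut C c"
  unfolding is_conj_class_def by blast

lemma Q_inv:
  assumes mu: "is_conj_class C c \<mu>" and s: "\<sigma> \<in> Aut C d" and f: "f \<in> Hom C c d"
    and psi: "\<psi> \<in> \<mu>" and e: "Comp C \<sigma> f = Comp C f \<psi>" and p: "p \<in> Aut C c"
  shows "\<exists>\<psi>'\<in>\<mu>. Comp C \<sigma> (Comp C f p) = Comp C (Comp C f p) \<psi>'"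
proof -
  obtain g0 where g0: "g0 \<in> Aut C c" and mueq: "\<mu> = {x \<in> Aut C c. \<exists>h \<in> Aut C c. Comp C h x = Comp C g0 h}"
    using mu unfolding is_conj_class_def by blast
  have psiA: "\<psi> \<in> Aut C c" using psi mueq by blast
  obtain h where h: "h \<in> Aut C c" "Comp C h \<psi> = Comp C g0 h" using psi mueq by blast
  obtain p' where p': "p' \<in> Aut C c" "Comp C p' p = Idm C c" "Comp C p p' = Idm C c"
    using aut_inv[OF p] by blast
  define x where "x = Comp C (Comp C p' \<psi>) p"
  have p'psi: "Comp C p' \<psi> \<in> Aut C c" using aut_comp[OF p'(1) psiA] .
  have xA: "x \<in> Aut C c" unfolding x_def using aut_comp[OF p'psi p] .
  have fp: "Comp C f p \<in> Hom C c d" using hom_aut_comp[OF f p] .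
  have hA: "h \<in> Hom C c c" using aut_hom' h(1) .
  have hp: "Comp C h p \<in> Hom C c c" using hom_aut_comp[OF hA p] .
  have "Comp C (Comp C f p) x = Comp C (Comp C (Comp C f p) (Comp C p' \<psi>)) p"
    unfolding x_def using assoc_hAA[OF fp p'psi p] .
  also have "Comp C (Comp C f p) (Comp C p' \<psi>) = Comp C (Comp C (Comp C f p) p') \<psi>"
    using assoc_hAA[OF fp p'(1) psiA] .
  also have "\<dots> = Comp C f \<psi>" using inv_cancel[OF f p p'(1) p'(3) psiA] .
  finally have e1: "Comp C (Comp C f p) x = Comp C (Comp C f \<psi>) p" .
  have e2: "Comp C \<sigma> (Comp C f p) = Comp C (Comp C f \<psi>) p"
    using assoc_AhA[OF s f p] e by simp
  have "Comp C (Comp C h p) x = Comp C (Comp C (Comp C h p) (Comp C p' \<psi>)) p"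
    unfolding x_def using assoc_hAA[OF hp p'psi p] .
  also have "Comp C (Comp C h p) (Comp C p' \<psi>) = Comp C (Comp C (Comp C h p) p') \<psi>"
    using assoc_hAA[OF hp p'(1) psiA] .
  also have "\<dots> = Comp C h \<psi>" using inv_cancel[OF hA p p'(1) p'(3) psiA] .
  also have "\<dots> = Comp C g0 h" using h(2) .
  finally have "Comp C (Comp C h p) x = Comp C (Comp C g0 h) p" .
  also have "\<dots> = Comp C g0 (Comp C h p)" using assoc_hAA[OF aut_hom'[OF g0] h(1) p] by simp
  finally have "Comp C (Comp C h p) x = Comp C g0 (Comp C h p)" .
  moreover have "Comp C h p \<in> Aut C c" using aut_comp[OF h(1) p] .
  ultimately have xmu: "x \<in> \<mu>" using mueq xA by blast
  show ?thesis
  proof (rule bexI[where x=x])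
    show "Comp C \<sigma> (Comp C f p) = Comp C (Comp C f p) x" using e1 e2 by simp
  qed (rule xmu)
qed

lemma binomX_count:
  assumes mu: "is_conj_class C c \<mu>" and s: "\<sigma> \<in> Aut C d"
  shows "card (Aut C c) * binomX C c \<mu> d \<sigma> = card {f \<in> Hom C c d. \<exists>\<psi>\<in>\<mu>. Comp C \<sigma> f = Comp C f \<psi>}"
proof -
  define Q where "Q = (\<lambda>f. \<exists>\<psi>\<in>\<mu>. Comp C \<sigma> f = Comp C f \<psi>)"
  define B where "B = {Ob \<in> orb c ` Hom C c d. \<exists>f\<in>Ob. Q f}"
  have bx: "binomX C c \<mu> d \<sigma> = card B" unfolding binomX_def B_def Q_def binom_eq by (rule refl)
  have Qinv: "Q g" if t1: "f \<in> Hom C c d" and t2: "Q f" and t3: "g \<in> orb c f" for f g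
  proof -
    obtain p where p: "p \<in> Aut C c" "g = Comp C f p" using t3 unfolding orb_def by blast
    obtain \<psi> where "\<psi> \<in> \<mu>" "Comp C \<sigma> f = Comp C f \<psi>" using t2 unfolding Q_def by blast
    from Q_inv[OF mu s t1 this p(1)] show ?thesis unfolding Q_def p(2) .
  qed
  have Bmem: "\<exists>f. f \<in> Hom C c d \<and> Ob = orb c f" if "Ob \<in> B" for Ob
    using that unfolding B_def by blast
  have U: "\<Union>B = {f \<in> Hom C c d. Q f}"
  proof (intro equalityI subsetI)
    fix x assume "x \<in> \<Union>B"
    then obtain Ob where Ob: "Ob \<in> B" "x \<in> Ob" by blast
    obtain f where f: "f \<in> Hom C c d" "Ob = orb c f" using Bmem[OF Ob(1)] by blast
    obtain g where g: "g \<in> Ob" "Q g" using Ob(1) unfolding B_def by blast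
    have gH: "g \<in> Hom C c d" using g(1) f orb_sub by blast
    have "orb c g = Ob" using orb_eq[OF f(1)] g(1) f(2) by simp
    then have xg: "x \<in> orb c g" using Ob(2) by simp
    have "Q x" by (rule Qinv[OF gH g(2) xg])
    moreover have "x \<in> Hom C c d" using orb_sub[OF gH] xg by blast
    ultimately show "x \<in> {f \<in> Hom C c d. Q f}" by simp
  next
    fix x assume x: "x \<in> {f \<in> Hom C c d. Q f}"
    then have xH: "x \<in> Hom C c d" and qx: "Q x" by auto
    have xo: "x \<in> orb c x" by (rule orb_self[OF xH])
    have "orb c x \<in> B" unfolding B_def using xH xo qx by blast
    then show "x \<in> \<Union>B" using xo by blast
  qed
  have disj: "pairwise disjnt B"
  proof (rule pairwiseI)
    fix Ob1 Ob2 assume Ob: "Ob1 \<in> B" "Ob2 \<in> B" "Ob1 \<noteq> Ob2"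
    obtain f1 where f1: "f1 \<in> Hom C c d" "Ob1 = orb c f1" using Bmem[OF Ob(1)] by blast
    obtain f2 where f2: "f2 \<in> Hom C c d" "Ob2 = orb c f2" using Bmem[OF Ob(2)] by blast
    show "disjnt Ob1 Ob2"
    proof (rule ccontr)
      assume "\<not> disjnt Ob1 Ob2"
      then have "orb c f1 \<inter> orb c f2 \<noteq> {}" using f1(2) f2(2) unfolding disjnt_def by simp
      then obtain x where x1: "x \<in> orb c f1" and x2: "x \<in> orb c f2" by blast
      have "orb c x = orb c f1" by (rule orb_eq[OF f1(1) x1])
      moreover have "orb c x = orb c f2" by (rule orb_eq[OF f2(1) x2])
      ultimately have "orb c f1 = orb c f2" by simp
      then show False using Ob(3) f1(2) f2(2) by simp
    qed
  qed
  have cardO: "card Ob = card (Aut C c)" if ob: "Ob \<in> B" for Ob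
  proof -
    obtain f where f: "f \<in> Hom C c d" "Ob = orb c f" using Bmem[OF ob] by blast
    show ?thesis unfolding f(2) by (rule orb_card[OF f(1)])
  qed
  have finO: "finite Ob" if ob: "Ob \<in> B" for Ob
  proof -
    obtain f where f: "f \<in> Hom C c d" "Ob = orb c f" using Bmem[OF ob] by blast
    show ?thesis unfolding f(2) by (rule finite_subset[OF orb_sub[OF f(1)] fin_hom])
  qed
  have "card (\<Union>B) = sum card B" by (rule card_Union_disjoint[OF disj finO])
  also have "\<dots> = (\<Sum>Ob\<in>B. card (Aut C c))" by (rule sum.cong[OF refl cardO])
  also have "\<dots> = card B * card (Aut C c)" by simp
  finally have e: "card (\<Union>B) = card B * card (Aut C c)" .
  have "card {f \<in> Hom C c d. Q f} = card B * card (Aut C c)" using e unfolding U .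
  then have "card {f \<in> Hom C c d. Q f} = card (Aut C c) * binomX C c \<mu> d \<sigma>"
    unfolding bx by (rule trans[OF _ mult.commute])
  then show ?thesis unfolding Q_def by (rule sym)
qed

lemma binomX_sum:
  assumes mu: "is_conj_class C c \<mu>" and ne: "Hom C c d \<noteq> {}"
  shows "card (Aut C c) * (\<Sum>\<sigma>\<in>Aut C d. binomX C c \<mu> d \<sigma>) = card \<mu> * card (Aut C d)"
proof -
  define R where "R = (\<lambda>\<sigma> f. \<exists>\<psi>\<in>\<mu>. Comp C \<sigma> f = Comp C f \<psi>)"
  have fmu: "finite \<mu>" using conj_sub[OF mu] fin_aut finite_subset by blast
  have "card (Aut C c) * (\<Sum>\<sigma>\<in>Aut C d. binomX C c \<mu> d \<sigma>)
      = (\<Sum>\<sigma>\<in>Aut C d. card {f \<in> Hom C c d. R \<sigma> f})"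
    unfolding sum_distrib_left R_def using binomX_count[OF mu] by simp
  also have "\<dots> = (\<Sum>\<sigma>\<in>Aut C d. \<Sum>f\<in>Hom C c d. if R \<sigma> f then 1 else 0)"
  proof (rule sum.cong[OF refl])
    fix \<sigma> show "card {f \<in> Hom C c d. R \<sigma> f} = (\<Sum>f\<in>Hom C c d. if R \<sigma> f then 1 else 0)"
      using sum.inter_filter[OF fin_hom, where g="\<lambda>_. 1::nat" and P="R \<sigma>"] by simp
  qed
  also have "\<dots> = (\<Sum>f\<in>Hom C c d. \<Sum>\<sigma>\<in>Aut C d. if R \<sigma> f then 1 else 0)"
    by (rule sum.swap)
  also have "\<dots> = (\<Sum>f\<in>Hom C c d. card {\<sigma> \<in> Aut C d. R \<sigma> f})"
  proof (rule sum.cong[OF refl])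
    fix f show "(\<Sum>\<sigma>\<in>Aut C d. if R \<sigma> f then 1 else 0) = card {\<sigma> \<in> Aut C d. R \<sigma> f}"
      using sum.inter_filter[OF fin_aut, where g="\<lambda>_. 1::nat" and P="\<lambda>\<sigma>. R \<sigma> f"] by simp
  qed
  also have "\<dots> = (\<Sum>f\<in>Hom C c d. card \<mu> * card {\<sigma> \<in> Aut C d. Comp C \<sigma> f = f})"
  proof (rule sum.cong[OF refl])
    fix f assume f: "f \<in> Hom C c d"
    have "{\<sigma> \<in> Aut C d. R \<sigma> f} = (\<Union>\<psi>\<in>\<mu>. {\<sigma> \<in> Aut C d. Comp C \<sigma> f = Comp C f \<psi>})"
      unfolding R_def by blast
    moreover have "card (\<Union>\<psi>\<in>\<mu>. {\<sigma> \<in> Aut C d. Comp C \<sigma> f = Comp C f \<psi>})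
        = (\<Sum>\<psi>\<in>\<mu>. card {\<sigma> \<in> Aut C d. Comp C \<sigma> f = Comp C f \<psi>})"
    proof (rule card_UN_disjoint)
      show "finite \<mu>" by (rule fmu)
      show "\<forall>i\<in>\<mu>. finite {\<sigma> \<in> Aut C d. Comp C \<sigma> f = Comp C f i}" using fin_aut by simp
      show "\<forall>i\<in>\<mu>. \<forall>j\<in>\<mu>. i \<noteq> j \<longrightarrow> {\<sigma> \<in> Aut C d. Comp C \<sigma> f = Comp C f i} \<inter>
              {\<sigma> \<in> Aut C d. Comp C \<sigma> f = Comp C f j} = {}"
      proof (intro ballI impI)
        fix i j assume ij: "i \<in> \<mu>" "j \<in> \<mu>" "i \<noteq> j"
        have "Comp C f i \<noteq> Comp C f j"
          using cancel[OF f aut_hom' aut_hom'] conj_sub[OF mu] ij by blast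
        then show "{\<sigma> \<in> Aut C d. Comp C \<sigma> f = Comp C f i} \<inter>
              {\<sigma> \<in> Aut C d. Comp C \<sigma> f = Comp C f j} = {}" by auto
      qed
    qed
    moreover have "(\<Sum>\<psi>\<in>\<mu>. card {\<sigma> \<in> Aut C d. Comp C \<sigma> f = Comp C f \<psi>})
        = (\<Sum>\<psi>\<in>\<mu>. card {\<sigma> \<in> Aut C d. Comp C \<sigma> f = f})"
      using fiber_card[OF f hom_aut_comp[OF f]] conj_sub[OF mu] by (intro sum.cong) auto
    ultimately show "card {\<sigma> \<in> Aut C d. R \<sigma> f} = card \<mu> * card {\<sigma> \<in> Aut C d. Comp C \<sigma> f = f}"
      by simp
  qed
  also have "\<dots> = card \<mu> * card (Aut C d)"
    using stab_sum[OF ne] by (simp add: sum_distrib_left[symmetric])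
  finally show ?thesis .
qed

end


lemma sum_sum_list_div:
  fixes g :: "'a \<Rightarrow> 'b \<Rightarrow> complex"
  shows "(\<Sum>\<sigma>\<in>A. sum_list (map (g \<sigma>) F)) / N = sum_list (map (\<lambda>x. (\<Sum>\<sigma>\<in>A. g \<sigma> x) / N) F)"
  by (induction F) (simp_all add: sum.distrib add_divide_distrib)

lemma of_nat_sum_list_map:
  "(of_nat (sum_list (map h F)) :: complex) = sum_list (map (\<lambda>x. of_nat (h x)) F)"
  by (induction F) auto

context FIC begin

lemma expect_binomX:
  assumes mu: "is_conj_class C c \<mu>" and ne: "Hom C c d \<noteq> {}"
  shows "(\<Sum>\<sigma>\<in>Aut C d. of_nat (binomX C c \<mu> d \<sigma>) :: complex)
       = of_nat (card \<mu>) * of_nat (card (Aut C d)) / of_nat (card (Aut C c))"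
proof -
  have cO: "c \<in> Obj C" using mu unfolding is_conj_class_def by blast
  have Nc: "(of_nat (card (Aut C c)) :: complex) \<noteq> 0" using aut_card_pos[OF cO] by simp
  have "(of_nat (card (Aut C c) * (\<Sum>\<sigma>\<in>Aut C d. binomX C c \<mu> d \<sigma>)) :: complex)
      = of_nat (card \<mu> * card (Aut C d))" using binomX_sum[OF mu ne] by simp
  then have "of_nat (card (Aut C c)) * (\<Sum>\<sigma>\<in>Aut C d. of_nat (binomX C c \<mu> d \<sigma>) :: complex)
      = of_nat (card \<mu>) * of_nat (card (Aut C d))" by simp
  then show ?thesis using Nc by (simp add: field_simps)
qed

lemma expect_charpoly:
  assumes data: "charpoly_data C M" and dO: "d \<in> Obj C"
    and reach: "\<forall>p\<in>M. a p \<noteq> 0 \<longrightarrow> Hom C (fst p) d \<noteq> {}"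
  shows "expect C (charpoly C M a) d
       = (\<Sum>p\<in>M. a p * of_nat (card (snd p)) / of_nat (card (Aut C (fst p))))"
proof -
  have Nd: "(of_nat (card (Aut C d)) :: complex) \<noteq> 0" using aut_card_pos[OF dO] by simp
  have cc: "is_conj_class C (fst p) (snd p)" if "p \<in> M" for p
    using data that unfolding charpoly_data_def by auto
  have "expect C (charpoly C M a) d
      = (\<Sum>\<sigma>\<in>Aut C d. \<Sum>p\<in>M. a p * of_nat (binomX C (fst p) (snd p) d \<sigma>)) / of_nat (card (Aut C d))"
    unfolding expect_def charpoly_def by (simp add: split_def)
  also have "\<dots> = (\<Sum>p\<in>M. a p * (\<Sum>\<sigma>\<in>Aut C d. of_nat (binomX C (fst p) (snd p) d \<sigma>))) / of_nat (card (Aut C d))"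
    by (subst sum.swap) (simp add: sum_distrib_left)
  also have "\<dots> = (\<Sum>p\<in>M. a p * (\<Sum>\<sigma>\<in>Aut C d. of_nat (binomX C (fst p) (snd p) d \<sigma>)) / of_nat (card (Aut C d)))"
    by (rule sum_divide_distrib)
  also have "\<dots> = (\<Sum>p\<in>M. a p * of_nat (card (snd p)) / of_nat (card (Aut C (fst p))))"
  proof (rule sum.cong[OF refl])
    fix p assume p: "p \<in> M"
    show "a p * (\<Sum>\<sigma>\<in>Aut C d. of_nat (binomX C (fst p) (snd p) d \<sigma>)) / of_nat (card (Aut C d))
        = a p * of_nat (card (snd p)) / of_nat (card (Aut C (fst p)))"
    proof (cases "a p = 0")
      case True then show ?thesis by simp
    next
      case False
      then have ne: "Hom C (fst p) d \<noteq> {}" using reach p by blast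
      show ?thesis unfolding expect_binomX[OF cc[OF p] ne] using Nd by (simp add: field_simps)
    qed
  qed
  finally show ?thesis .
qed

lemma expect_ind:
  assumes rep: "is_rep C c n \<rho>" and dO: "d \<in> Obj C"
  shows "expect C (ind_char C c \<rho>) d = (if Hom C c d = {} then 0
           else (\<Sum>\<psi>\<in>Aut C c. mat_trace (\<rho> \<psi>)) / of_nat (card (Aut C c)))"
proof -
  have Nd: "(of_nat (card (Aut C d)) :: complex) \<noteq> 0" using aut_card_pos[OF dO] by simp
  define X where "X = (\<lambda>\<sigma>. \<Sum>f \<in> Hom C c d. \<Sum>\<psi> \<in> {\<psi> \<in> Aut C c. Comp C \<sigma> f = Comp C f \<psi>}. mat_trace (\<rho> \<psi>))"
  have "expect C (ind_char C c \<rho>) d = (\<Sum>\<sigma>\<in>Aut C d. X \<sigma> / of_nat (card (Aut C c))) / of_nat (card (Aut C d))"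
    unfolding expect_def ind_char_def X_def by simp
  also have "\<dots> = (\<Sum>\<sigma>\<in>Aut C d. X \<sigma>) / of_nat (card (Aut C c)) / of_nat (card (Aut C d))"
    by (simp add: sum_divide_distrib)
  finally have e: "expect C (ind_char C c \<rho>) d = (\<Sum>\<sigma>\<in>Aut C d. X \<sigma>) / of_nat (card (Aut C c)) / of_nat (card (Aut C d))" .
  show ?thesis
  proof (cases "Hom C c d = {}")
    case True then show ?thesis using e unfolding X_def by simp
  next
    case False
    have "(\<Sum>\<sigma>\<in>Aut C d. X \<sigma>) = of_nat (card (Aut C d)) * (\<Sum>\<psi>\<in>Aut C c. mat_trace (\<rho> \<psi>))"
      unfolding X_def by (rule ind_sum[OF False])
    then show ?thesis using e False Nd by simp
  qed
qed

lemma expect_free: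
  "expect C (free_char C F) d = sum_list (map (\<lambda>x. expect C (ind_char C (fst x) (snd (snd x))) d) F)"
proof -
  have "expect C (free_char C F) d
      = (\<Sum>\<sigma>\<in>Aut C d. sum_list (map (\<lambda>x. ind_char C (fst x) (snd (snd x)) d \<sigma>) F)) / of_nat (card (Aut C d))"
    unfolding expect_def free_char_def by (simp add: split_def)
  also have "\<dots> = sum_list (map (\<lambda>x. (\<Sum>\<sigma>\<in>Aut C d. ind_char C (fst x) (snd (snd x)) d \<sigma>) / of_nat (card (Aut C d))) F)"
    by (rule sum_sum_list_div)
  also have "\<dots> = sum_list (map (\<lambda>x. expect C (ind_char C (fst x) (snd (snd x))) d) F)"
    unfolding expect_def by simp
  finally show ?thesis .
qed

lemma main:
  shows "(\<forall>M a c. charpoly_data C M \<and> c \<in> Obj C \<and> charpoly_deg_le C M a c \<longrightarrow>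
            (\<forall>d \<in> Obj C. \<forall>e \<in> Obj C. obj_le C c d \<and> obj_le C c e \<longrightarrow>
               expect C (charpoly C M a) d = expect C (charpoly C M a) e))
       \<and> (\<forall>F. free_module_data C F \<longrightarrow>
            (\<forall>d \<in> Obj C. \<exists>k::nat. expect C (free_char C F) d = of_nat k) \<and>
            (\<forall>d \<in> Obj C. \<forall>e \<in> Obj C. obj_le C d e \<longrightarrow>
               Re (expect C (free_char C F) d) \<le> Re (expect C (free_char C F) e)))"
proof (intro conjI allI impI ballI)
  fix M a c d e
  assume H: "charpoly_data C M \<and> c \<in> Obj C \<and> charpoly_deg_le C M a c"
    and dO: "d \<in> Obj C" and eO: "e \<in> Obj C" and le: "obj_le C c d \<and> obj_le C c e"
  have reach: "\<forall>p\<in>M. a p \<noteq> 0 \<longrightarrow> Hom C (fst p) x \<noteq> {}" if cx: "obj_le C c x" for x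
  proof (intro ballI impI)
    fix p assume p: "p \<in> M" and ap: "a p \<noteq> 0"
    have "obj_le C (fst p) c" using H p ap unfolding charpoly_deg_le_def by auto
    then obtain g where g: "g \<in> Hom C (fst p) c" unfolding obj_le_def by blast
    obtain h where h: "h \<in> Hom C c x" using cx unfolding obj_le_def by blast
    show "Hom C (fst p) x \<noteq> {}" using comp_hom[OF g h] by blast
  qed
  show "expect C (charpoly C M a) d = expect C (charpoly C M a) e"
    using expect_charpoly[OF _ dO reach] expect_charpoly[OF _ eO reach] H le by simp
next
  fix F assume fm: "free_module_data C F"
  have rep: "is_rep C (fst x) (fst (snd x)) (snd (snd x))" if "x \<in> set F" for x
    using fm that unfolding free_module_data_def by (auto simp: split_def)
  define kk where "kk = (\<lambda>x::'o \<times> nat \<times> ('m \<Rightarrow> complex mat). SOME k::nat. (\<Sum>\<psi>\<in>Aut C (fst x). mat_trace (snd (snd x) \<psi>)) / of_nat (card (Aut C (fst x))) = of_nat k)"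
  have kk: "(\<Sum>\<psi>\<in>Aut C (fst x). mat_trace (snd (snd x) \<psi>)) / of_nat (card (Aut C (fst x))) = of_nat (kk x)"
    if "x \<in> set F" for x
    unfolding kk_def by (rule someI_ex[OF rep_avg[OF rep[OF that]]])
  define nd where "nd = (\<lambda>d. sum_list (map (\<lambda>x. if Hom C (fst x) d = {} then 0 else kk x) F))"
  have E: "expect C (free_char C F) d = of_nat (nd d)" if dO: "d \<in> Obj C" for d
  proof -
    have "expect C (free_char C F) d = sum_list (map (\<lambda>x. expect C (ind_char C (fst x) (snd (snd x))) d) F)"
      by (rule expect_free)
    also have "\<dots> = sum_list (map (\<lambda>x. of_nat (if Hom C (fst x) d = {} then 0 else kk x)) F)"
    proof (rule arg_cong[where f=sum_list], rule map_cong[OF refl])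
      fix x assume x: "x \<in> set F"
      show "expect C (ind_char C (fst x) (snd (snd x))) d = of_nat (if Hom C (fst x) d = {} then 0 else kk x)"
        using expect_ind[OF rep[OF x] dO] kk[OF x] by simp
    qed
    also have "\<dots> = of_nat (nd d)" unfolding nd_def by (rule of_nat_sum_list_map[symmetric])
    finally show ?thesis .
  qed
  show "\<exists>k::nat. expect C (free_char C F) d = of_nat k" if "d \<in> Obj C" for d
    using E[OF that] by blast
  show "Re (expect C (free_char C F) d) \<le> Re (expect C (free_char C F) e)"
    if dO: "d \<in> Obj C" and eO: "e \<in> Obj C" and le: "obj_le C d e" for d e
  proof -
    obtain h where h: "h \<in> Hom C d e" using le unfolding obj_le_def by blast
    have "nd d \<le> nd e" unfolding nd_def
    proof (rule sum_list_mono)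
      fix x assume "x \<in> set F"
      show "(if Hom C (fst x) d = {} then 0 else kk x) \<le> (if Hom C (fst x) e = {} then 0 else kk x)"
      proof (cases "Hom C (fst x) d = {}")
        case False
        then obtain g where "g \<in> Hom C (fst x) d" by blast
        then have "Hom C (fst x) e \<noteq> {}" using comp_hom[OF _ h] by blast
        then show ?thesis using False by simp
      qed simp
    qed
    then show ?thesis using E[OF dO] E[OF eO] by simp
  qed
qed

end


theorem mainTheorem13:
  fixes C :: "('o, 'm) cat"
  assumes "FI_type C"
  shows "(\<forall>M a c. charpoly_data C M \<and> c \<in> Obj C \<and> charpoly_deg_le C M a c \<longrightarrow>
            (\<forall>d \<in> Obj C. \<forall>e \<in> Obj C. obj_le C c d \<and> obj_le C c e \<longrightarrow>
               expect C (charpoly C M a) d = expect C (charpoly C M a) e))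
       \<and> (\<forall>F. free_module_data C F \<longrightarrow>
            (\<forall>d \<in> Obj C. \<exists>k::nat. expect C (free_char C F) d = of_nat k) \<and>
            (\<forall>d \<in> Obj C. \<forall>e \<in> Obj C. obj_le C d e \<longrightarrow>
               Re (expect C (free_char C F) d) \<le> Re (expect C (free_char C F) e)))"
  using FIC.main[OF FIC.intro[OF assms]] .

end
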